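(* Let $k\le l$ be positive integers with $\gcd(k,l)=1$, let $n\ge1$ and $m\ge 0$ be integers, and write $m=qn+r$ with integers $q\ge 0$, $0\le r<n$. If $r\ge \frac{n}{q+2}$, then $$L^{k,l}(m,n)=nkq+\min\bigl(nk,\ r(k+l)\bigr).$$
   Context: $\mathcal D^{k,l}(m,n)$ denotes the set of all $nk\times nl$ matrices with nonnegative integer entries all of whose row sums equal $ml$ and all of whose column sums equal $mk$. For an $s\times t$ matrix $A=(a_{ij})$ with $s\le t$, a transversal of $A$ is a set of entries $T=\{a_{1i_1},\dots,a_{si_s}\}$ with $i_1,\dots,i_s\in\{1,\dots,t\}$ pairwise distinct, and $|T|=a_{1i_1}+\cdots+a_{si_s}$; if $s>t$, the transversals of $A$ are those of its transpose. The tropical determinant is ${\rm tdet}(A)=\max_T|T|$, and $L^{k,l}(m,n)=\min_{A\in\mathcal D^{k,l}(m,n)}{\rm tdet}(A)$. *)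

theory Defs
  imports Main
begin

(* An s x t matrix with nonnegative integer entries is represented by
   A :: nat => nat => nat, with rows indexed by {0..<s} and columns by {0..<t}. *)

definition transversal_sums :: "nat \<Rightarrow> nat \<Rightarrow> (nat \<Rightarrow> nat \<Rightarrow> nat) \<Rightarrow> nat set" where
  "transversal_sums s t A =
     (if s \<le> t then
        {(\<Sum>i<s. A i (f i)) | f. inj_on f {..<s} \<and> f ` {..<s} \<subseteq> {..<t}}
      else
        {(\<Sum>j<t. A (g j) j) | g. inj_on g {..<t} \<and> g ` {..<t} \<subseteq> {..<s}})"

definition tdet :: "nat \<Rightarrow> nat \<Rightarrow> (nat \<Rightarrow> nat \<Rightarrow> nat) \<Rightarrow> nat" where
  "tdet s t A = Max (transversal_sums s t A)"

definition Dkl :: "nat \<Rightarrow> nat \<Rightarrow> nat \<Rightarrow> nat \<Rightarrow> (nat \<Rightarrow> nat \<Rightarrow> nat) set" where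
  "Dkl k l m n =
     {A. (\<forall>i j. (i \<ge> n*k \<or> j \<ge> n*l) \<longrightarrow> A i j = 0)
       \<and> (\<forall>i<n*k. (\<Sum>j<n*l. A i j) = m*l)
       \<and> (\<forall>j<n*l. (\<Sum>i<n*k. A i j) = m*k)}"

definition Lkl :: "nat \<Rightarrow> nat \<Rightarrow> nat \<Rightarrow> nat \<Rightarrow> nat" where
  "Lkl k l m n = Min (tdet (n*k) (n*l) ` Dkl k l m n)"

end

theory Submission
  imports Defs
begin

lemma hall:
  fixes N :: "'a \<Rightarrow> 'b set"
  assumes "finite I" "\<forall>i\<in>I. finite (N i)"
    "\<forall>S\<subseteq>I. card S \<le> card (\<Union>(N ` S))"
  shows "\<exists>f. inj_on f I \<and> (\<forall>i\<in>I. f i \<in> N i)"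
using assms
proof (induction "card I" arbitrary: I N rule: less_induct)
  case less
  show ?case
  proof (cases "I = {}")
    case True thus ?thesis by auto
  next
    case False
    show ?thesis
    proof (cases "\<exists>S. S \<subseteq> I \<and> S \<noteq> {} \<and> S \<noteq> I \<and> card (\<Union>(N ` S)) \<le> card S")
      case True
      then obtain S where S: "S \<subseteq> I" "S \<noteq> {}" "S \<noteq> I" "card (\<Union>(N ` S)) \<le> card S" by blast
      have finS: "finite S" using S(1) less.prems(1) finite_subset by blast
      have cS: "card S < card I" using S less.prems(1) by (meson psubsetI psubset_card_mono)
      have "\<exists>f. inj_on f S \<and> (\<forall>i\<in>S. f i \<in> N i)"
        apply (rule less.hyps[OF cS finS]) using less.prems S(1) by auto
      then obtain f1 where f1: "inj_on f1 S" "\<forall>i\<in>S. f1 i \<in> N i" by blast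
      define NS where "NS = \<Union>(N ` S)"
      define N2 where "N2 = (\<lambda>i. N i - NS)"
      have eqS: "card NS = card S" using S(4) less.prems(3) S(1) NS_def by (simp add: le_antisym)
      have finNS: "finite NS" using NS_def finS less.prems(2) S(1) by auto
      have "\<exists>f. inj_on f (I - S) \<and> (\<forall>i\<in>I-S. f i \<in> N2 i)"
      proof (rule less.hyps)
        have "card S > 0" using finS S(2) by auto
        moreover have "card S \<le> card I" using card_mono[OF less.prems(1) S(1)] .
        ultimately show "card (I - S) < card I" using S(1) less.prems(1) finS
          by (simp add: card_Diff_subset)
        show "finite (I - S)" using less.prems(1) by auto
        show "\<forall>i\<in>I-S. finite (N2 i)" using less.prems(2) N2_def by auto
        show "\<forall>T\<subseteq>I-S. card T \<le> card (\<Union>(N2 ` T))"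
        proof (intro allI impI)
          fix T assume T: "T \<subseteq> I - S"
          have finT: "finite T" using T less.prems(1) finite_subset by blast
          have e1: "\<Union>(N2 ` T) = \<Union>(N ` (T \<union> S)) - NS" unfolding N2_def NS_def by auto
          have c1: "card (T \<union> S) \<le> card (\<Union>(N ` (T \<union> S)))" proof -
            have "T \<union> S \<subseteq> I" using T S(1) by auto
            thus ?thesis using less.prems(3) by blast
          qed
          have c2: "card (T \<union> S) = card T + card S" using T finT finS by (subst card_Un_disjoint) auto
          have sub: "NS \<subseteq> \<Union>(N ` (T \<union> S))" unfolding NS_def by auto
          have c3: "card (\<Union>(N ` (T \<union> S)) - NS) = card (\<Union>(N ` (T \<union> S))) - card NS"
            using sub finNS by (simp add: card_Diff_subset)
          show "card T \<le> card (\<Union>(N2 ` T))" using e1 c1 c2 c3 eqS by simp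
        qed
      qed
      then obtain f2 where f2: "inj_on f2 (I - S)" "\<forall>i\<in>I-S. f2 i \<in> N2 i" by blast
      define f where "f = (\<lambda>i. if i \<in> S then f1 i else f2 i)"
      have "inj_on f I"
      proof (rule inj_onI)
        fix x y assume xy: "x \<in> I" "y \<in> I" "f x = f y"
        show "x = y"
        proof (cases "x \<in> S"; cases "y \<in> S")
          assume "x \<in> S" "y \<in> S" thus ?thesis using xy f1(1) f_def by (auto dest: inj_onD)
        next
          assume "x \<in> S" "y \<notin> S"
          have "f x \<in> NS" using `x \<in> S` f1 f_def NS_def by auto
          moreover have "f y \<notin> NS" using `y \<notin> S` xy(2) f2 f_def N2_def by auto
          ultimately show ?thesis using xy by simp
        next
          assume "x \<notin> S" "y \<in> S"
          have "f y \<in> NS" using `y \<in> S` f1 f_def NS_def by auto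
          moreover have "f x \<notin> NS" using `x \<notin> S` xy(1) f2 f_def N2_def by auto
          ultimately show ?thesis using xy by simp
        next
          assume "x \<notin> S" "y \<notin> S" thus ?thesis using xy f2(1) f_def by (auto dest: inj_onD)
        qed
      qed
      moreover have "\<forall>i\<in>I. f i \<in> N i" using f1 f2 f_def N2_def by auto
      ultimately show ?thesis by blast
    next
      case False2: False
      obtain i0 where i0: "i0 \<in> I" using False by blast
      have "card {i0} \<le> card (N i0)" proof -
        have "{i0} \<subseteq> I" using i0 by auto
        hence "card {i0} \<le> card (\<Union>(N ` {i0}))" using less.prems(3) by blast
        thus ?thesis by simp
      qed
      hence "N i0 \<noteq> {}" by auto
      then obtain j0 where j0: "j0 \<in> N i0" by blast
      define N' where "N' = (\<lambda>i. N i - {j0})"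
      have "\<exists>f. inj_on f (I - {i0}) \<and> (\<forall>i\<in>I-{i0}. f i \<in> N' i)"
      proof (rule less.hyps)
        show "card (I - {i0}) < card I" using i0 less.prems(1) by (metis card_Diff1_less)
        show "finite (I - {i0})" using less.prems(1) by auto
        show "\<forall>i\<in>I-{i0}. finite (N' i)" using less.prems(2) N'_def by auto
        show "\<forall>T\<subseteq>I-{i0}. card T \<le> card (\<Union>(N' ` T))"
        proof (intro allI impI)
          fix T assume T: "T \<subseteq> I - {i0}"
          show "card T \<le> card (\<Union>(N' ` T))"
          proof (cases "T = {}")
            case True thus ?thesis by simp
          next
            case False
            have "T \<noteq> I" using T i0 by auto
            hence lt: "card T < card (\<Union>(N ` T))" using False2 False T by auto
            have finT: "finite T" using T less.prems(1) finite_subset by blast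
            have finU: "finite (\<Union>(N ` T))" using finT less.prems(2) T by auto
            have "\<Union>(N' ` T) = \<Union>(N ` T) - {j0}" unfolding N'_def by auto
            moreover have "card (\<Union>(N ` T) - {j0}) \<ge> card (\<Union>(N ` T)) - 1"
              using finU by (metis card_Diff_singleton_if diff_le_self le_refl)
            ultimately show ?thesis using lt by simp
          qed
        qed
      qed
      then obtain f' where f': "inj_on f' (I - {i0})" "\<forall>i\<in>I-{i0}. f' i \<in> N' i" by blast
      define f where "f = f'(i0 := j0)"
      have "inj_on f I"
      proof (rule inj_onI)
        fix x y assume xy: "x \<in> I" "y \<in> I" "f x = f y"
        show "x = y"
        proof (cases "x = i0"; cases "y = i0")
          assume "x = i0" "y \<noteq> i0" thus ?thesis using xy f' N'_def f_def by force
        next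
          assume "x \<noteq> i0" "y = i0" thus ?thesis using xy f' N'_def f_def by force
        next
          assume "x \<noteq> i0" "y \<noteq> i0" thus ?thesis using xy f'(1) f_def by (auto dest: inj_onD)
        qed simp
      qed
      moreover have "\<forall>i\<in>I. f i \<in> N i" using f' j0 N'_def f_def by auto
      ultimately show ?thesis by blast
    qed
  qed
qed

definition feas :: "nat \<Rightarrow> (nat \<Rightarrow> nat \<Rightarrow> nat) \<Rightarrow> (nat \<Rightarrow> int) \<Rightarrow> (nat \<Rightarrow> int) \<Rightarrow> bool" where
  "feas t W u v = (\<forall>i<t. \<forall>j<t. int (W i j) \<le> u i + v j)"

lemma feas_nonneg:
  assumes "feas t W u v" shows "0 \<le> (\<Sum>i<t. u i) + (\<Sum>j<t. v j)"
proof -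
  have "(\<Sum>i<t. u i) + (\<Sum>j<t. v j) = (\<Sum>i<t. u i + v i)" by (simp add: sum.distrib)
  also have "\<dots> \<ge> (\<Sum>i<t. int (W i i))" using assms unfolding feas_def by (intro sum_mono) auto
  finally have "(\<Sum>i<t. int (W i i)) \<le> (\<Sum>i<t. u i) + (\<Sum>j<t. v j)" .
  moreover have "0 \<le> (\<Sum>i<t. int (W i i))" by (intro sum_nonneg) auto
  ultimately show ?thesis by linarith
qed

lemma dual_exists:
  fixes W :: "nat \<Rightarrow> nat \<Rightarrow> nat" and t :: nat
  shows "\<exists>\<sigma> u v. inj_on \<sigma> {..<t} \<and> \<sigma> ` {..<t} \<subseteq> {..<t} \<and> feas t W u v
       \<and> int (\<Sum>i<t. W i (\<sigma> i)) = (\<Sum>i<t. u i) + (\<Sum>j<t. v j)"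
proof -
  define P where "P = (\<lambda>n::nat. \<exists>u v. feas t W u v \<and> (\<Sum>i<t. u i) + (\<Sum>j<t. v j) = int n)"
  define u0 where "u0 = (\<lambda>i. int (\<Sum>j<t. W i j))"
  have f0: "feas t W u0 (\<lambda>_. 0)" unfolding feas_def u0_def
    by (auto intro!: member_le_sum)
  have "P (nat ((\<Sum>i<t. u0 i) + (\<Sum>j<t. (\<lambda>_. 0::int) j)))"
    unfolding P_def using f0 feas_nonneg[OF f0] by (intro exI[of _ u0] exI[of _ "\<lambda>_. 0"]) auto
  hence ex: "\<exists>n. P n" by blast
  define n0 where "n0 = (LEAST n. P n)"
  have Pn0: "P n0" unfolding n0_def using ex by (metis LeastI)
  have minP: "\<And>n. P n \<Longrightarrow> n0 \<le> n" unfolding n0_def by (simp add: Least_le)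
  obtain u v where uv: "feas t W u v" "(\<Sum>i<t. u i) + (\<Sum>j<t. v j) = int n0"
    using Pn0 unfolding P_def by blast
  define N where "N = (\<lambda>i. {j. j < t \<and> int (W i j) = u i + v j})"
  have hallc: "\<forall>S\<subseteq>{..<t}. card S \<le> card (\<Union>(N ` S))"
  proof (rule ccontr)
    assume "\<not> ?thesis"
    then obtain S where S: "S \<subseteq> {..<t}" "card (\<Union>(N ` S)) < card S" by (meson not_le)
    define NS where "NS = \<Union>(N ` S)"
    have NSsub: "NS \<subseteq> {..<t}" unfolding NS_def N_def by auto
    define u' where "u' = (\<lambda>i. if i \<in> S then u i - 1 else u i)"
    define v' where "v' = (\<lambda>j. if j \<in> NS then v j + 1 else v j)"
    have f': "feas t W u' v'" unfolding feas_def
    proof (intro allI impI)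
      fix i j assume ij: "i < t" "j < t"
      have le: "int (W i j) \<le> u i + v j" using uv(1) ij unfolding feas_def by auto
      show "int (W i j) \<le> u' i + v' j"
      proof (cases "i \<in> S \<and> j \<notin> NS")
        case True
        hence "int (W i j) \<noteq> u i + v j" using ij unfolding NS_def N_def by auto
        thus ?thesis using le True unfolding u'_def v'_def by auto
      next
        case False thus ?thesis using le unfolding u'_def v'_def by auto
      qed
    qed
    have su: "(\<Sum>i<t. u' i) = (\<Sum>i<t. u i) - int (card S)"
    proof -
      have "(\<Sum>i<t. u' i) = (\<Sum>i<t. u i - (if i \<in> S then 1 else 0))" unfolding u'_def by (intro sum.cong) auto
      also have "\<dots> = (\<Sum>i<t. u i) - (\<Sum>i<t. (if i \<in> S then 1 else 0))" by (simp add: sum_subtractf)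
      also have "(\<Sum>i<t. (if i \<in> S then 1 else 0::int)) = int (card S)"
        using S(1) by (simp add: sum.If_cases Int_absorb1)
      finally show ?thesis .
    qed
    have sv: "(\<Sum>j<t. v' j) = (\<Sum>j<t. v j) + int (card NS)"
    proof -
      have "(\<Sum>j<t. v' j) = (\<Sum>j<t. v j + (if j \<in> NS then 1 else 0))" unfolding v'_def by (intro sum.cong) auto
      also have "\<dots> = (\<Sum>j<t. v j) + (\<Sum>j<t. (if j \<in> NS then 1 else 0))" by (simp add: sum.distrib)
      also have "(\<Sum>j<t. (if j \<in> NS then 1 else 0::int)) = int (card NS)"
        using NSsub by (simp add: sum.If_cases Int_absorb1)
      finally show ?thesis .
    qed
    have nn: "0 \<le> (\<Sum>i<t. u' i) + (\<Sum>j<t. v' j)" using feas_nonneg[OF f'] .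
    have "P (nat ((\<Sum>i<t. u' i) + (\<Sum>j<t. v' j)))" unfolding P_def using f' nn by auto
    hence "n0 \<le> nat ((\<Sum>i<t. u' i) + (\<Sum>j<t. v' j))" by (rule minP)
    moreover have "(\<Sum>i<t. u' i) + (\<Sum>j<t. v' j) < int n0"
    proof -
      have "card NS < card S" using S(2) NS_def by simp
      thus ?thesis using su sv uv(2) by linarith
    qed
    ultimately show False using nn by linarith
  qed
  have "\<exists>f. inj_on f {..<t} \<and> (\<forall>i\<in>{..<t}. f i \<in> N i)"
    by (rule hall) (use hallc N_def in auto)
  then obtain \<sigma> where \<sigma>: "inj_on \<sigma> {..<t}" "\<forall>i\<in>{..<t}. \<sigma> i \<in> N i" by blast
  have im: "\<sigma> ` {..<t} \<subseteq> {..<t}" using \<sigma>(2) N_def by auto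
  have im2: "\<sigma> ` {..<t} = {..<t}" using endo_inj_surj[OF _ im \<sigma>(1)] by simp
  have "int (\<Sum>i<t. W i (\<sigma> i)) = (\<Sum>i<t. u i + v (\<sigma> i))"
    unfolding of_nat_sum using \<sigma>(2) N_def by (intro sum.cong) auto
  also have "\<dots> = (\<Sum>i<t. u i) + (\<Sum>i<t. v (\<sigma> i))" by (simp add: sum.distrib)
  also have "(\<Sum>i<t. v (\<sigma> i)) = (\<Sum>j\<in>\<sigma> ` {..<t}. v j)" using sum.reindex[OF \<sigma>(1), of v] by simp
  also have "\<dots> = (\<Sum>j<t. v j)" using im2 by simp
  finally show ?thesis using \<sigma>(1) im uv(1) by blast
qed

lemma ts_le_bound:
  assumes "s \<le> t" "x \<in> transversal_sums s t A"
  shows "x \<le> (\<Sum>i<s. \<Sum>j<t. A i j)"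
proof -
  from assms obtain f where f: "x = (\<Sum>i<s. A i (f i))" "f ` {..<s} \<subseteq> {..<t}"
    unfolding transversal_sums_def by auto
  show ?thesis unfolding f(1) using f(2) by (intro sum_mono member_le_sum) auto
qed

lemma ts_finite: "s \<le> t \<Longrightarrow> finite (transversal_sums s t A)"
  by (rule finite_subset[of _ "{..(\<Sum>i<s. \<Sum>j<t. A i j)}"]) (auto dest: ts_le_bound)

lemma ts_mem:
  assumes "s \<le> t" "inj_on f {..<s}" "f ` {..<s} \<subseteq> {..<t}"
  shows "(\<Sum>i<s. A i (f i)) \<in> transversal_sums s t A"
  using assms unfolding transversal_sums_def by auto

lemma ts_nonempty: "s \<le> t \<Longrightarrow> transversal_sums s t A \<noteq> {}"
  using ts_mem[of s t id A] by auto

lemma tdet_le: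
  assumes "s \<le> t"
    "\<And>f. inj_on f {..<s} \<Longrightarrow> f ` {..<s} \<subseteq> {..<t} \<Longrightarrow> (\<Sum>i<s. A i (f i)) \<le> X"
  shows "tdet s t A \<le> X"
  unfolding tdet_def using ts_finite[OF assms(1)] ts_nonempty[OF assms(1)] assms(2)
  by (subst Max_le_iff) (auto simp: transversal_sums_def assms(1))

lemma tdet_ge:
  assumes "s \<le> t" "inj_on f {..<s}" "f ` {..<s} \<subseteq> {..<t}"
  shows "(\<Sum>i<s. A i (f i)) \<le> tdet s t A"
  unfolding tdet_def using ts_finite[OF assms(1)] ts_mem[OF assms] by (rule Max_ge)

lemma tdet_pot:
  assumes "s \<le> t" "\<forall>i<s. \<forall>j<t. A i j \<le> u i + v j"
  shows "tdet s t A \<le> (\<Sum>i<s. u i) + (\<Sum>j<t. (v j :: nat))"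
proof (rule tdet_le[OF assms(1)])
  fix f assume f: "inj_on f {..<s}" "f ` {..<s} \<subseteq> {..<t}"
  have "(\<Sum>i<s. A i (f i)) \<le> (\<Sum>i<s. u i + v (f i))" using f(2) assms(2) by (intro sum_mono) auto
  also have "\<dots> = (\<Sum>i<s. u i) + (\<Sum>i<s. v (f i))" by (simp add: sum.distrib)
  also have "(\<Sum>i<s. v (f i)) = (\<Sum>j\<in>f ` {..<s}. v j)" using sum.reindex[OF f(1), of v] by simp
  also have "\<dots> \<le> (\<Sum>j<t. v j)" using f(2) by (intro sum_mono2) auto
  finally show "(\<Sum>i<s. A i (f i)) \<le> (\<Sum>i<s. u i) + (\<Sum>j<t. v j)" by simp
qed

lemma lower:
  assumes A: "A \<in> Dkl k l m n" and kl: "k \<le> l" "0 < k" "0 < n" and m: "m = q*n + r"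
  shows "min (n*k*(q+1)) (m*k + r*l) \<le> tdet (n*k) (n*l) A"
proof -
  define s where "s = n*k"
  define t where "t = n*l"
  have st: "s \<le> t" "0 < s" "0 < t" using kl unfolding s_def t_def by auto
  have zero: "\<And>i j. i \<ge> s \<or> j \<ge> t \<Longrightarrow> A i j = 0" using A unfolding Dkl_def s_def t_def by auto
  have rows: "\<And>i. i < s \<Longrightarrow> (\<Sum>j<t. A i j) = m*l" using A unfolding Dkl_def s_def t_def by auto
  have cols: "\<And>j. j < t \<Longrightarrow> (\<Sum>i<s. A i j) = m*k" using A unfolding Dkl_def s_def t_def by auto
  obtain \<sigma> u v where sig: "inj_on \<sigma> {..<t}" "\<sigma> ` {..<t} \<subseteq> {..<t}" "feas t A u v"
    "int (\<Sum>i<t. A i (\<sigma> i)) = (\<Sum>i<t. u i) + (\<Sum>j<t. v j)"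
    using dual_exists[of t A] by blast
  define c where "c = Min (v ` {..<t})"
  have "c \<in> v ` {..<t}" unfolding c_def
  proof (intro Min_in)
    show "v ` {..<t} \<noteq> {}" using st(3) by blast
  qed auto
  then obtain j0 where j0: "j0 < t" "v j0 = c" by auto
  have cmin: "\<And>j. j < t \<Longrightarrow> c \<le> v j" unfolding c_def by (intro Min_le) auto
  define u' where "u' = (\<lambda>i. u i + c)"
  define v' where "v' = (\<lambda>j. v j - c)"
  have tot: "(\<Sum>i<t. u i) + (\<Sum>j<t. v j) = (\<Sum>i<t. u' i) + (\<Sum>j<t. v' j)"
    unfolding u'_def v'_def by (simp add: sum.distrib sum_subtractf)
  have fe: "\<And>i j. i < t \<Longrightarrow> j < t \<Longrightarrow> int (A i j) \<le> u' i + v' j"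
    using sig(3) unfolding feas_def u'_def v'_def by auto
  have v'nn: "\<And>j. j < t \<Longrightarrow> 0 \<le> v' j" unfolding v'_def using cmin by auto
  have v'0: "v' j0 = 0" unfolding v'_def using j0 by simp
  have split: "{..<t} = {..<s} \<union> {s..<t}" using st by auto
  have sumu: "(\<Sum>i<t. u' i) = (\<Sum>i<s. u' i) + (\<Sum>i\<in>{s..<t}. u' i)"
    by (subst split, subst sum.union_disjoint) auto
  have pad: "0 \<le> (\<Sum>i\<in>{s..<t}. u' i)"
  proof (intro sum_nonneg)
    fix i assume i: "i \<in> {s..<t}"
    have "int (A i j0) \<le> u' i + v' j0" using fe i j0 by auto
    thus "0 \<le> u' i" using v'0 by simp
  qed
  define U where "U = (\<Sum>i<s. u' i)"
  define V where "V = (\<Sum>j<t. v' j)"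
  have Vnn: "0 \<le> V" unfolding V_def using v'nn by (intro sum_nonneg) auto
  have Umk: "int (m*k) \<le> U"
  proof -
    have "int (m*k) = (\<Sum>i<s. int (A i j0))" using cols[OF j0(1)] by (simp flip: of_nat_sum)
    also have "\<dots> \<le> (\<Sum>i<s. u' i + v' j0)" using fe j0 st by (intro sum_mono) auto
    finally show ?thesis using v'0 U_def by simp
  qed
  have bound: "int (min (n*k*(q+1)) (m*k + r*l)) \<le> U + V"
  proof (cases "\<forall>i<s. int q + 1 \<le> u' i")
    case True
    have "int (s*(q+1)) = (\<Sum>i<s. int q + 1)" by (simp add: algebra_simps)
    also have "\<dots> \<le> U" unfolding U_def using True by (intro sum_mono) auto
    finally have "int (n*k*(q+1)) \<le> U" unfolding s_def .
    moreover have "int (min (n*k*(q+1)) (m*k + r*l)) \<le> int (n*k*(q+1))" by (metis min.cobounded1 of_nat_le_iff)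
    ultimately show ?thesis using Vnn by linarith
  next
    case False
    then obtain i0 where i0: "i0 < s" "u' i0 \<le> int q" by force
    have "int (m*l) = (\<Sum>j<t. int (A i0 j))" using rows[OF i0(1)] by (simp flip: of_nat_sum)
    also have "\<dots> \<le> (\<Sum>j<t. u' i0 + v' j)" using fe i0 st by (intro sum_mono) auto
    also have "\<dots> = int t * u' i0 + V" unfolding V_def by (simp add: sum.distrib)
    also have "\<dots> \<le> int t * int q + V" using i0(2) by (simp add: mult_left_mono)
    finally have "int (m*l) \<le> int t * int q + V" .
    hence "int (r*l) \<le> V" unfolding m t_def by (simp add: algebra_simps)
    moreover have "int (min (n*k*(q+1)) (m*k + r*l)) \<le> int (m*k) + int (r*l)" by (metis min.cobounded2 of_nat_add of_nat_le_iff)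
    ultimately show ?thesis using Umk by linarith
  qed
  have wt: "(\<Sum>i<t. A i (\<sigma> i)) = (\<Sum>i<s. A i (\<sigma> i))"
  proof -
    have "(\<Sum>i<t. A i (\<sigma> i)) = (\<Sum>i<s. A i (\<sigma> i)) + (\<Sum>i\<in>{s..<t}. A i (\<sigma> i))"
      by (subst split, subst sum.union_disjoint) auto
    also have "(\<Sum>i\<in>{s..<t}. A i (\<sigma> i)) = 0" using zero by auto
    finally show ?thesis by simp
  qed
  have "int (min (n*k*(q+1)) (m*k + r*l)) \<le> int (\<Sum>i<s. A i (\<sigma> i))"
  proof -
    have "int (\<Sum>i<s. A i (\<sigma> i)) = U + (\<Sum>i\<in>{s..<t}. u' i) + V"
      using sig(4) tot sumu wt unfolding U_def V_def by simp
    thus ?thesis using bound pad by linarith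
  qed
  also have "(\<Sum>i<s. A i (\<sigma> i)) \<le> tdet s t A"
  proof (rule tdet_ge[OF st(1)])
    have ss: "{..<s} \<subseteq> {..<t}" using st(1) by auto
    show "inj_on \<sigma> {..<s}" using inj_on_subset[OF sig(1) ss] .
    show "\<sigma> ` {..<s} \<subseteq> {..<t}" using sig(2) ss image_mono by (meson order_trans)
  qed
  finally show ?thesis unfolding s_def t_def by simp
qed

lemma sum_div_block:
  fixes g :: "nat \<Rightarrow> nat"
  assumes "0 < l"
  shows "(\<Sum>j<N*l. g (j div l)) = l * (\<Sum>h<N. g h)"
proof (induction N)
  case 0 thus ?case by simp
next
  case (Suc N)
  have "(\<Sum>j<Suc N*l. g (j div l)) = (\<Sum>j\<in>{0..<N*l}. g (j div l)) + (\<Sum>j\<in>{N*l..<N*l+l}. g (j div l))"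
    by (subst sum.atLeastLessThan_concat) (auto simp: lessThan_atLeast0 add.commute)
  also have "(\<Sum>j\<in>{N*l..<N*l+l}. g (j div l)) = (\<Sum>c\<in>{0..<l}. g ((c + N*l) div l))"
    using sum.shift_bounds_nat_ivl[of "\<lambda>j. g (j div l)" 0 "N*l" l] by (simp add: add.commute)
  also have "\<dots> = (\<Sum>c\<in>{0..<l}. g N)" using assms by (intro sum.cong) auto
  finally show ?case using Suc by (simp add: lessThan_atLeast0 algebra_simps)
qed

lemma rot_inv:
  fixes g h N :: nat
  assumes "0 < N" "h < N"
  shows "((g + h) mod N + (N - g mod N)) mod N = h"
proof -
  have "((g + h) mod N + (N - g mod N)) mod N = (g + h + (N - g mod N)) mod N"
    using mod_add_left_eq[of "g+h" N "N - g mod N"] by simp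
  also have "g + h + (N - g mod N) = h + N * (g div N) + N"
  proof -
    have e: "N * (g div N) + g mod N = g" by (rule mult_div_mod_eq)
    have "g mod N < N" using assms(1) by simp
    thus ?thesis using e by linarith
  qed
  also have "h + N * (g div N) + N = h + N * (g div N + 1)" by (simp add: algebra_simps)
  also have "(h + N * (g div N + 1)) mod N = h mod N" by (rule mod_mult_self2)
  also have "h mod N = h" using assms by simp
  finally show ?thesis .
qed

lemma count_mod:
  fixes g R N :: nat
  assumes "R \<le> N"
  shows "(\<Sum>h<N. (if (g + h) mod N < R then 1 else 0 :: nat)) = R"
proof (cases "N = 0")
  case True thus ?thesis using assms by simp
next
  case False
  hence N: "0 < N" by simp
  have inj: "inj_on (\<lambda>h. (g + h) mod N) {..<N}"
  proof (rule inj_on_inverseI[where g = "\<lambda>x. (x + (N - g mod N)) mod N"])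
    fix x assume "x \<in> {..<N}"
    thus "((g + x) mod N + (N - g mod N)) mod N = x" by (intro rot_inv[OF N]) simp
  qed
  have im: "(\<lambda>h. (g + h) mod N) ` {..<N} = {..<N}"
    using N by (intro endo_inj_surj[OF _ _ inj]) auto
  have "(\<Sum>h<N. (if (g + h) mod N < R then 1 else 0 :: nat))
      = (\<Sum>x\<in>(\<lambda>h. (g + h) mod N) ` {..<N}. (if x < R then 1 else 0))"
    using sum.reindex[OF inj, of "\<lambda>x. if x < R then 1 else (0::nat)"] by simp
  also have "\<dots> = (\<Sum>x<N. (if x < R then 1 else 0))" using im by simp
  also have "\<dots> = card ({..<N} \<inter> {x. x < R})" by (simp add: sum.If_cases)
  also have "{..<N} \<inter> {x. x < R} = {..<R}" using assms by auto
  finally show ?thesis by simp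
qed

definition circ :: "nat \<Rightarrow> nat \<Rightarrow> nat \<Rightarrow> nat \<Rightarrow> nat \<Rightarrow> nat \<Rightarrow> nat" where
  "circ k l N R i j = (if (i div k + j div l) mod N < R then 1 else 0)"

lemma circ_le1: "circ k l N R i j \<le> 1" unfolding circ_def by auto

lemma circ_R0: "circ k l N 0 i j = 0" unfolding circ_def by auto

lemma circ_row:
  assumes "0 < l" "R \<le> N"
  shows "(\<Sum>j<N*l. circ k l N R i j) = R*l"
proof -
  have "(\<Sum>j<N*l. circ k l N R i j) = l * (\<Sum>h<N. (if (i div k + h) mod N < R then 1 else 0))"
    unfolding circ_def using sum_div_block[OF assms(1), of "\<lambda>h. if (i div k + h) mod N < R then 1 else 0" N] .
  thus ?thesis using count_mod[OF assms(2)] by simp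
qed

lemma circ_col:
  assumes "0 < k" "R \<le> N"
  shows "(\<Sum>i<N*k. circ k l N R i j) = R*k"
proof -
  have "(\<Sum>i<N*k. circ k l N R i j) = k * (\<Sum>h<N. (if (j div l + h) mod N < R then 1 else 0))"
    unfolding circ_def using sum_div_block[OF assms(1), of "\<lambda>h. if (j div l + h) mod N < R then 1 else 0" N]
    by (simp add: add.commute)
  thus ?thesis using count_mod[OF assms(2)] by simp
qed

lemma sum_split_if:
  assumes "a \<le> b"
  shows "(\<Sum>i<b. if i < a then f i else (y::nat)) = (\<Sum>i<a. f i) + (b - a) * y"
proof -
  have "(\<Sum>i<b. if i < a then f i else y) = (\<Sum>i\<in>{0..<a}. if i < a then f i else y) + (\<Sum>i\<in>{a..<b}. if i < a then f i else y)"
    using assms sum.atLeastLessThan_concat[of 0 a b "\<lambda>i. if i < a then f i else y"]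
    by (simp add: lessThan_atLeast0)
  also have "(\<Sum>i\<in>{0..<a}. if i < a then f i else y) = (\<Sum>i<a. f i)"
    unfolding lessThan_atLeast0 by (intro sum.cong) auto
  also have "(\<Sum>i\<in>{a..<b}. if i < a then f i else y) = (\<Sum>i\<in>{a..<b}. y)" by (intro sum.cong) auto
  finally show ?thesis by simp
qed

definition MA :: "nat \<Rightarrow> nat \<Rightarrow> nat \<Rightarrow> nat \<Rightarrow> nat \<Rightarrow> nat \<Rightarrow> nat \<Rightarrow> nat" where
  "MA k l n q r i j = (if i < n*k \<and> j < n*l then q + circ k l n r i j else 0)"

lemma MA_in:
  assumes "0 < k" "0 < l" "r \<le> n" "m = q*n + r"
  shows "MA k l n q r \<in> Dkl k l m n"
proof -
  have rows: "(\<Sum>j<n*l. MA k l n q r i j) = m*l" if "i < n*k" for i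
  proof -
    have "(\<Sum>j<n*l. MA k l n q r i j) = (\<Sum>j<n*l. q + circ k l n r i j)"
      using that unfolding MA_def by (intro sum.cong) auto
    also have "\<dots> = n*l*q + r*l" using circ_row[OF assms(2,3)] by (simp add: sum.distrib)
    finally show ?thesis using assms(4) by (simp add: algebra_simps)
  qed
  have cols: "(\<Sum>i<n*k. MA k l n q r i j) = m*k" if "j < n*l" for j
  proof -
    have "(\<Sum>i<n*k. MA k l n q r i j) = (\<Sum>i<n*k. q + circ k l n r i j)"
      using that unfolding MA_def by (intro sum.cong) auto
    also have "\<dots> = n*k*q + r*k" using circ_col[OF assms(1,3)] by (simp add: sum.distrib)
    finally show ?thesis using assms(4) by (simp add: algebra_simps)
  qed
  show ?thesis unfolding Dkl_def using rows cols by (auto simp: MA_def)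
qed

lemma MA_tdet:
  assumes "k \<le> l"
  shows "tdet (n*k) (n*l) (MA k l n q r) \<le> n*k*(q+1)"
proof -
  have "tdet (n*k) (n*l) (MA k l n q r) \<le> (\<Sum>i<n*k. q+1) + (\<Sum>j<n*l. (0::nat))"
    by (rule tdet_pot) (use assms circ_le1 in \<open>auto simp: MA_def\<close>)
  thus ?thesis by simp
qed

definition MB :: "nat \<Rightarrow> nat \<Rightarrow> nat \<Rightarrow> nat \<Rightarrow> nat \<Rightarrow> nat \<Rightarrow> nat \<Rightarrow> nat" where
  "MB k l n q r i j = (let c = r*q + 2*r - n in
     (if i < n*k \<and> j < n*l then
        (if i < r*k then (if j < r*l then c div r + circ k l r (c mod r) i j else q+1)
         else (if j < r*l then q+1 else q)) else 0))"

lemma MB_in: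
  assumes "0 < k" "0 < l" "0 < r" "r < n" "m = q*n + r" "n \<le> r*(q+2)"
  shows "MB k l n q r \<in> Dkl k l m n"
proof -
  define c where "c = r*q + 2*r - n"
  define d where "d = n - r"
  have nd: "n = r + d" using assms(4) d_def by simp
  have cd: "c + d = r*q + r"
  proof -
    have h: "r + d \<le> r*q + 2*r" using assms(6) nd by (simp add: algebra_simps)
    have "c = r*q + 2*r - (r + d)" unfolding c_def using nd by simp
    thus ?thesis using h by linarith
  qed
  have cdiv: "r * (c div r) + c mod r = c" by (rule mult_div_mod_eq)
  have cm: "c + d*(q+1) = m" using cd assms(5) nd by (simp add: algebra_simps)
  have cmr: "c mod r \<le> r" using assms(3) by (simp add: less_imp_le)
  have MBe: "MB k l n q r i j = (if i < n*k \<and> j < n*l then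
        (if i < r*k then (if j < r*l then c div r + circ k l r (c mod r) i j else q+1)
         else (if j < r*l then q+1 else q)) else 0)" for i j
    unfolding MB_def c_def Let_def by simp
  have rk: "r*k \<le> n*k" "r*l \<le> n*l" using assms(4) by auto
  have rows: "(\<Sum>j<n*l. MB k l n q r i j) = m*l" if "i < n*k" for i
  proof (cases "i < r*k")
    case True
    have "(\<Sum>j<n*l. MB k l n q r i j) = (\<Sum>j<n*l. if j < r*l then c div r + circ k l r (c mod r) i j else q+1)"
      using that True unfolding MBe by (intro sum.cong) auto
    also have "\<dots> = (\<Sum>j<r*l. c div r + circ k l r (c mod r) i j) + (n*l - r*l)*(q+1)"
      by (rule sum_split_if[OF rk(2)])
    also have "(\<Sum>j<r*l. c div r + circ k l r (c mod r) i j) = r*l*(c div r) + (c mod r)*l"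
      using circ_row[OF assms(2) cmr] by (simp add: sum.distrib)
    also have "r*l*(c div r) + (c mod r)*l = l*c" using cdiv by (metis add_mult_distrib2 mult.assoc mult.commute)
    also have "n*l - r*l = d*l" using nd by (simp add: algebra_simps)
    finally show ?thesis using cm by (metis add_mult_distrib2 mult.assoc mult.commute)
  next
    case False
    have "(\<Sum>j<n*l. MB k l n q r i j) = (\<Sum>j<n*l. if j < r*l then q+1 else q)"
      using that False unfolding MBe by (intro sum.cong) auto
    also have "\<dots> = r*l*(q+1) + (n*l - r*l)*q"
      using sum_split_if[OF rk(2), of "\<lambda>_. q+1" q] by simp
    also have "n*l - r*l = d*l" using nd by (simp add: algebra_simps)
    finally show ?thesis using assms(5) nd by (simp add: algebra_simps)
  qed
  have cols: "(\<Sum>i<n*k. MB k l n q r i j) = m*k" if "j < n*l" for j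
  proof (cases "j < r*l")
    case True
    have "(\<Sum>i<n*k. MB k l n q r i j) = (\<Sum>i<n*k. if i < r*k then c div r + circ k l r (c mod r) i j else q+1)"
      using that True unfolding MBe by (intro sum.cong) auto
    also have "\<dots> = (\<Sum>i<r*k. c div r + circ k l r (c mod r) i j) + (n*k - r*k)*(q+1)"
      by (rule sum_split_if[OF rk(1)])
    also have "(\<Sum>i<r*k. c div r + circ k l r (c mod r) i j) = r*k*(c div r) + (c mod r)*k"
      using circ_col[OF assms(1) cmr] by (simp add: sum.distrib)
    also have "r*k*(c div r) + (c mod r)*k = k*c" using cdiv by (metis add_mult_distrib2 mult.assoc mult.commute)
    also have "n*k - r*k = d*k" using nd by (simp add: algebra_simps)
    finally show ?thesis using cm by (metis add_mult_distrib2 mult.assoc mult.commute)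
  next
    case False
    have "(\<Sum>i<n*k. MB k l n q r i j) = (\<Sum>i<n*k. if i < r*k then q+1 else q)"
      using that False unfolding MBe by (intro sum.cong) auto
    also have "\<dots> = r*k*(q+1) + (n*k - r*k)*q"
      using sum_split_if[OF rk(1), of "\<lambda>_. q+1" q] by simp
    also have "n*k - r*k = d*k" using nd by (simp add: algebra_simps)
    finally show ?thesis using assms(5) nd by (simp add: algebra_simps)
  qed
  show ?thesis unfolding Dkl_def using rows cols by (auto simp: MBe)
qed

lemma MB_tdet:
  assumes "k \<le> l" "0 < r" "r < n" "n \<le> r*(q+2)"
  shows "tdet (n*k) (n*l) (MB k l n q r) \<le> n*k*q + r*(k+l)"
proof -
  define c where "c = r*q + 2*r - n"
  have MBe: "MB k l n q r i j = (if i < n*k \<and> j < n*l then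
        (if i < r*k then (if j < r*l then c div r + circ k l r (c mod r) i j else q+1)
         else (if j < r*l then q+1 else q)) else 0)" for i j
    unfolding MB_def c_def Let_def by simp
  have cle: "c \<le> r*(q+2)" unfolding c_def by (simp add: algebra_simps)
  have blk: "c div r + circ k l r (c mod r) i j \<le> q + 2" for i j
  proof (cases "c mod r = 0")
    case True
    hence "c div r * r = c" by (metis add.right_neutral mult_div_mod_eq mult.commute)
    hence "c div r \<le> q + 2" using cle assms(2) by (metis mult.commute mult_le_cancel2)
    thus ?thesis using True circ_R0 by simp
  next
    case False
    have "r * (c div r) + c mod r = c" by (rule mult_div_mod_eq)
    hence "r * (c div r) < r * (q+2)" using cle False by linarith
    hence "c div r < q + 2" using mult_less_cancel1[of r "c div r" "q+2"] by blast
    thus ?thesis using circ_le1[of k l r "c mod r" i j] by linarith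
  qed
  define u where "u = (\<lambda>i. if i < r*k then q+1 else q)"
  define v where "v = (\<lambda>j. if j < r*l then 1 else (0::nat))"
  have "tdet (n*k) (n*l) (MB k l n q r) \<le> (\<Sum>i<n*k. u i) + (\<Sum>j<n*l. v j)"
  proof (rule tdet_pot)
    show "n*k \<le> n*l" using assms(1) by simp
    show "\<forall>i<n*k. \<forall>j<n*l. MB k l n q r i j \<le> u i + v j"
      using blk unfolding MBe u_def v_def by auto
  qed
  also have "(\<Sum>i<n*k. u i) = r*k*(q+1) + (n*k - r*k)*q"
    unfolding u_def using sum_split_if[of "r*k" "n*k" "\<lambda>_. q+1" q] assms(3) by simp
  also have "(\<Sum>j<n*l. v j) = r*l"
    unfolding v_def using sum_split_if[of "r*l" "n*l" "\<lambda>_. 1" 0] assms(3) by simp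
  also have "r*k*(q+1) + (n*k - r*k)*q + r*l = n*k*q + r*(k+l)"
  proof -
    obtain d where nd: "n = r + d" using assms(3) less_imp_add_positive by blast
    show ?thesis unfolding nd by (simp add: algebra_simps)
  qed
  finally show ?thesis .
qed

lemma Dkl_finite: "finite (Dkl k l m n)"
proof -
  define RS where "RS = {g :: nat \<Rightarrow> nat. \<forall>j. (j \<in> {..<n*l} \<longrightarrow> g j \<in> {..m*l}) \<and> (j \<notin> {..<n*l} \<longrightarrow> g j = 0)}"
  have fRS: "finite RS" unfolding RS_def by (intro finite_set_of_finite_funs) auto
  have "finite {A :: nat \<Rightarrow> nat \<Rightarrow> nat. \<forall>i. (i \<in> {..<n*k} \<longrightarrow> A i \<in> RS) \<and> (i \<notin> {..<n*k} \<longrightarrow> A i = (\<lambda>_. 0))}"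
    using fRS by (intro finite_set_of_finite_funs) auto
  moreover have "Dkl k l m n \<subseteq> {A :: nat \<Rightarrow> nat \<Rightarrow> nat. \<forall>i. (i \<in> {..<n*k} \<longrightarrow> A i \<in> RS) \<and> (i \<notin> {..<n*k} \<longrightarrow> A i = (\<lambda>_. 0))}"
  proof
    fix A assume A: "A \<in> Dkl k l m n"
    have z: "\<And>i j. i \<ge> n*k \<or> j \<ge> n*l \<Longrightarrow> A i j = 0" using A unfolding Dkl_def by auto
    have r: "\<And>i. i < n*k \<Longrightarrow> (\<Sum>j<n*l. A i j) = m*l" using A unfolding Dkl_def by auto
    have "A i \<in> RS" if "i < n*k" for i
      unfolding RS_def
    proof (rule CollectI, intro allI conjI impI)
      fix j assume "j \<in> {..<n*l}"
      hence "A i j \<le> (\<Sum>j<n*l. A i j)" by (intro member_le_sum) auto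
      thus "A i j \<in> {..m*l}" using r[OF that] by simp
    next
      fix j assume "j \<notin> {..<n*l}" thus "A i j = 0" using z by auto
    qed
    moreover have "A i = (\<lambda>_. 0)" if "\<not> i < n*k" for i using z that by auto
    ultimately show "A \<in> {A :: nat \<Rightarrow> nat \<Rightarrow> nat. \<forall>i. (i \<in> {..<n*k} \<longrightarrow> A i \<in> RS) \<and> (i \<notin> {..<n*k} \<longrightarrow> A i = (\<lambda>_. 0))}"
      by auto
  qed
  ultimately show ?thesis by (rule finite_subset[rotated])
qed

theorem corollary4p2:
  fixes k l m n q r :: nat
  assumes "0 < k" and "k \<le> l" and "gcd k l = 1"
    and "1 \<le> n"
    and "m = q*n + r" and "r < n"
    and "n \<le> r * (q + 2)"
  shows "Lkl k l m n = n*k*q + min (n*k) (r*(k+l))"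
proof -
  define X where "X = n*k*q + min (n*k) (r*(k+l))"
  have l0: "0 < l" using assms(1,2) by simp
  have r0: "0 < r" using assms(4,7) by (cases r) auto
  have n0: "0 < n" using assms(4) by simp
  obtain A0 where A0: "A0 \<in> Dkl k l m n" "tdet (n*k) (n*l) A0 \<le> X"
  proof (cases "n*k \<le> r*(k+l)")
    case True
    have "MA k l n q r \<in> Dkl k l m n" using MA_in assms l0 by simp
    moreover have "tdet (n*k) (n*l) (MA k l n q r) \<le> X"
      using MA_tdet[OF assms(2), of n q r] True unfolding X_def by (simp add: algebra_simps)
    ultimately show ?thesis using that by blast
  next
    case False
    have "MB k l n q r \<in> Dkl k l m n" using MB_in assms l0 r0 by simp
    moreover have "tdet (n*k) (n*l) (MB k l n q r) \<le> X"
      using MB_tdet[OF assms(2) r0 assms(6,7)] False unfolding X_def by simp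
    ultimately show ?thesis using that by blast
  qed
  have low: "X \<le> tdet (n*k) (n*l) A" if "A \<in> Dkl k l m n" for A
  proof -
    have "min (n*k*(q+1)) (m*k + r*l) = X"
    proof -
      have "n*k*(q+1) = n*k*q + n*k" by (simp add: algebra_simps)
      moreover have "m*k + r*l = n*k*q + r*(k+l)" using assms(5) by (simp add: algebra_simps)
      ultimately show ?thesis unfolding X_def by (simp add: min_add_distrib_left)
    qed
    thus ?thesis using lower[OF that assms(2,1) n0 assms(5)] by simp
  qed
  have fin: "finite (tdet (n*k) (n*l) ` Dkl k l m n)" using Dkl_finite by simp
  have "Lkl k l m n \<le> X"
    unfolding Lkl_def using Min_le[OF fin, of "tdet (n*k) (n*l) A0"] A0 by simp
  moreover have "X \<le> Lkl k l m n"
    unfolding Lkl_def using fin A0(1) low by (subst Min_ge_iff) auto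
  ultimately show ?thesis unfolding X_def by simp
qed

end
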